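(* The set $\{A\in\mathbb{A}\cap [e^{-e}, e^{1/e}] : h(A) \text{ is algebraic}\}$ is dense in $[e^{-e},e^{1/e}]$.
   Context: $\mathbb{A}$ denotes the set of algebraic numbers. For a real $x\in[e^{-e},e^{1/e}]$, the sequence $x,\ x^x,\ x^{x^x},\ldots$ converges; its limit is denoted $h(x)$, and it satisfies $h(x)=x^{h(x)}$, $1/e\leq h(x)\leq e$. *)

theory Defs
  imports "HOL-Analysis.Analysis" "HOL-Computational_Algebra.Polynomial"
begin

fun tower :: "real \<Rightarrow> nat \<Rightarrow> real" where
  "tower x 0 = x"
| "tower x (Suc n) = x powr (tower x n)"

text \<open>h(x): the limit of the power tower sequence (meaningful for x in [e^-e, e^(1/e)]).\<close>
definition h :: "real \<Rightarrow> real" where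
  "h x = lim (tower x)"

end

theory Submission
  imports Defs
begin

lemma lip_aux:
  fixes f f' :: "real \<Rightarrow> real"
  assumes "a < b"
    and d: "\<And>t. a \<le> t \<Longrightarrow> t \<le> b \<Longrightarrow> (f has_real_derivative f' t) (at t)"
    and bd: "\<And>t. a \<le> t \<Longrightarrow> t \<le> b \<Longrightarrow> \<bar>f' t\<bar> \<le> c"
  shows "\<bar>f b - f a\<bar> \<le> c * \<bar>b - a\<bar>"
proof -
  obtain z where z: "a < z" "z < b" "f b - f a = (b - a) * f' z"
    using MVT2[OF assms(1), of f f'] d by blast
  have "\<bar>f b - f a\<bar> = \<bar>b - a\<bar> * \<bar>f' z\<bar>" using z by (simp add: abs_mult)
  also have "\<dots> \<le> \<bar>b - a\<bar> * c" using bd[of z] z by (intro mult_left_mono) auto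
  finally show ?thesis by (simp add: mult.commute)
qed

lemma lip:
  fixes f f' :: "real \<Rightarrow> real"
  assumes d: "\<And>t. min s r \<le> t \<Longrightarrow> t \<le> max s r \<Longrightarrow> (f has_real_derivative f' t) (at t)"
    and bd: "\<And>t. min s r \<le> t \<Longrightarrow> t \<le> max s r \<Longrightarrow> \<bar>f' t\<bar> \<le> c"
  shows "\<bar>f s - f r\<bar> \<le> c * \<bar>s - r\<bar>"
proof (cases s r rule: linorder_cases)
  case less
  then show ?thesis using lip_aux[of s r f f' c] d bd by (simp add: abs_minus_commute)
next
  case equal
  then show ?thesis by simp
next
  case greater
  then show ?thesis using lip_aux[of r s f f' c] d bd by simp
qed

lemma tower_Suc_exp: "0 < A \<Longrightarrow> tower A (Suc n) = exp (tower A n * ln A)"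
  by (simp add: powr_def)

lemma conv_gt1:
  assumes y: "1 < y" "y < exp 1"
  shows "tower (y powr (1/y)) \<longlonglongrightarrow> y"
proof -
  define A where "A = y powr (1/y)"
  define a where "a = ln y / y"
  have A0: "0 < A" using y by (simp add: A_def)
  have lnA: "ln A = a" using y by (simp add: A_def a_def)
  have fy: "exp (y * a) = y" using y by (simp add: a_def)
  have a0: "0 \<le> a" using y by (simp add: a_def)
  have ly: "0 \<le> ln y" "ln y < 1" using y ln_less_cancel_iff[of y "exp 1"] by auto
  have key: "exp (s * a) \<le> y \<and> \<bar>exp (s * a) - y\<bar> \<le> ln y * \<bar>s - y\<bar>" if "s \<le> y" for s
  proof
    show "exp (s * a) \<le> y" using that a0 fy
      by (metis exp_le_cancel_iff mult_right_mono)
    have "\<bar>exp (s * a) - exp (y * a)\<bar> \<le> ln y * \<bar>s - y\<bar>"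
    proof (rule lip[where f' = "\<lambda>t. exp (t * a) * a"])
      fix t assume "min s y \<le> t" "t \<le> max s y"
      then show "((\<lambda>t. exp (t * a)) has_real_derivative exp (t * a) * a) (at t)"
        by (auto intro!: derivative_eq_intros)
      have "t \<le> y" using \<open>t \<le> max s y\<close> that by simp
      then have "exp (t * a) * a \<le> exp (y * a) * a"
        using a0 by (intro mult_right_mono) (auto intro: mult_right_mono)
      moreover have "y * a = ln y" using y by (simp add: a_def)
      ultimately show "\<bar>exp (t * a) * a\<bar> \<le> ln y" using fy a0 by simp
    qed
    then show "\<bar>exp (s * a) - y\<bar> \<le> ln y * \<bar>s - y\<bar>" using fy by simp
  qed
  have A_le: "A \<le> y"
  proof -
    have "a \<le> ln y" using y ly by (simp add: a_def divide_le_eq mult_le_cancel_left1)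
    then have "A \<le> exp (ln y)" using lnA A0 by (metis exp_le_cancel_iff exp_ln)
    then show ?thesis using y by simp
  qed
  have ind: "tower A n \<le> y \<and> \<bar>tower A n - y\<bar> \<le> ln y ^ n * \<bar>A - y\<bar>" for n
  proof (induction n)
    case 0
    then show ?case using A_le by simp
  next
    case (Suc n)
    have e: "tower A (Suc n) = exp (tower A n * a)" using tower_Suc_exp[OF A0] lnA by simp
    have k: "exp (tower A n * a) \<le> y \<and> \<bar>exp (tower A n * a) - y\<bar> \<le> ln y * \<bar>tower A n - y\<bar>"
      using key Suc by blast
    have "\<bar>tower A (Suc n) - y\<bar> \<le> ln y * \<bar>tower A n - y\<bar>" using k unfolding e by blast
    also have "\<dots> \<le> ln y * (ln y ^ n * \<bar>A - y\<bar>)" using Suc ly by (intro mult_left_mono) auto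
    finally show ?case using k unfolding e by simp
  qed
  have "(\<lambda>n. ln y ^ n * \<bar>A - y\<bar>) \<longlonglongrightarrow> 0"
    using ly by (intro tendsto_mult_left_zero LIMSEQ_power_zero) auto
  then have "(\<lambda>n. tower A n - y) \<longlonglongrightarrow> 0"
  proof (rule Lim_null_comparison[rotated])
    have "\<forall>n. norm (tower A n - y) \<le> ln y ^ n * \<bar>A - y\<bar>" using ind by (metis real_norm_def)
    then show "\<forall>\<^sub>F n in sequentially. norm (tower A n - y) \<le> ln y ^ n * \<bar>A - y\<bar>"
      by (rule always_eventually)
  qed
  then show ?thesis unfolding A_def[symmetric] by (rule LIM_zero_cancel)
qed

lemma div2_filterlim: "filterlim (\<lambda>n::nat. n div 2) sequentially sequentially"
  unfolding filterlim_at_top eventually_sequentially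
  by (metis div_le_mono nonzero_mult_div_cancel_left zero_neq_numeral)

lemma conv_lt1:
  assumes y: "exp (-1) < y" "y < 1"
  shows "tower (y powr (1/y)) \<longlonglongrightarrow> y"
proof -
  define A where "A = y powr (1/y)"
  define a where "a = ln y / y"
  define c where "c = - a * exp (-1)"
  have y0: "0 < y" using y(1) by (metis exp_gt_zero less_trans)
  have A0: "0 < A" using y0 by (simp add: A_def)
  have lnA: "ln A = a" using y0 by (simp add: A_def a_def)
  have ya: "y * a = ln y" using y0 by (simp add: a_def)
  have fy: "exp (y * a) = y" using y0 ya by simp
  have lny: "ln y < 0" using y y0 by simp
  have lny1: "-1 < ln y" using y y0 ln_less_cancel_iff[of "exp (-1)" y] by simp
  have a0: "a < 0" using lny y0 by (simp add: a_def divide_neg_pos)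
  have c0: "0 \<le> c" using a0 by (simp add: c_def mult_nonpos_nonneg)
  have c1: "c < 1"
  proof -
    have "exp 1 * y > 1" using y(1) by (metis exp_minus exp_gt_zero divide_less_eq inverse_eq_divide mult.commute)
    then have "- ln y < exp 1 * y" using lny1 by linarith
    then have "(- ln y) / y < (exp 1 * y) / y" using y0 by (rule divide_strict_right_mono)
    then have "- a < exp 1" using y0 unfolding a_def by simp
    then show ?thesis unfolding c_def exp_minus by (simp add: field_simps)
  qed
  define g where "g t = exp (exp (t * a) * a)" for t
  have gy: "g y = y" using fy by (simp add: g_def)
  have glip: "\<bar>g s - y\<bar> \<le> c * \<bar>s - y\<bar>" for s
  proof -
    have "\<bar>g s - g y\<bar> \<le> c * \<bar>s - y\<bar>"
    proof (rule lip[where f' = "\<lambda>t. exp (exp (t * a) * a) * (exp (t * a) * a * a)"])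
      fix t
      show "(g has_real_derivative exp (exp (t * a) * a) * (exp (t * a) * a * a)) (at t)"
        unfolding g_def by (auto intro!: derivative_eq_intros)
      define q where "q = - a * exp (t * a)"
      have q0: "0 < q" using a0 by (simp add: q_def mult_neg_pos)
      have "1 + (q - 1) \<le> exp (q - 1)" by (rule exp_ge_add_one_self)
      then have "q \<le> exp q * exp (-1)" by (simp add: exp_diff exp_minus field_simps)
      then have "q * exp (- q) \<le> exp q * exp (-1) * exp (-q)" by (intro mult_right_mono) auto
      also have "\<dots> = exp (-1)" by (simp add: exp_minus field_simps)
      finally have qb: "q * exp (- q) \<le> exp (-1)" .
      have eq: "exp (exp (t * a) * a) * (exp (t * a) * a * a) = (-a) * (q * exp (-q))"
        by (simp add: q_def algebra_simps)
      have "0 \<le> (-a) * (q * exp (-q))" using a0 q0 by (intro mult_nonneg_nonneg) auto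
      moreover have "(-a) * (q * exp (-q)) \<le> (-a) * exp (-1)" using a0 qb by (intro mult_left_mono) auto
      ultimately show "\<bar>exp (exp (t * a) * a) * (exp (t * a) * a * a)\<bar> \<le> c"
        unfolding eq c_def by simp
    qed
    then show ?thesis using gy by simp
  qed
  have step: "tower A (Suc (Suc n)) = g (tower A n)" for n
    using A0 lnA by (simp add: g_def powr_def)
  have ind: "\<bar>tower A (2 * m + j) - y\<bar> \<le> c ^ m * \<bar>tower A j - y\<bar>" for m j
  proof (induction m)
    case 0
    then show ?case by simp
  next
    case (Suc m)
    have "tower A (2 * Suc m + j) = g (tower A (2 * m + j))"
      using step[of "2 * m + j"] by simp
    then have "\<bar>tower A (2 * Suc m + j) - y\<bar> \<le> c * \<bar>tower A (2 * m + j) - y\<bar>"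
      using glip by simp
    also have "\<dots> \<le> c * (c ^ m * \<bar>tower A j - y\<bar>)" using Suc c0 by (intro mult_left_mono) auto
    finally show ?case by simp
  qed
  define B where "B = \<bar>tower A 0 - y\<bar> + \<bar>tower A 1 - y\<bar>"
  have bnd: "\<forall>n. norm (tower A n - y) \<le> c ^ (n div 2) * B"
  proof
    fix n :: nat
    have n: "n = 2 * (n div 2) + n mod 2" by simp
    have "\<bar>tower A n - y\<bar> \<le> c ^ (n div 2) * \<bar>tower A (n mod 2) - y\<bar>"
      using ind[of "n div 2" "n mod 2"] n by simp
    also have "\<dots> \<le> c ^ (n div 2) * B"
    proof (intro mult_left_mono)
      show "\<bar>tower A (n mod 2) - y\<bar> \<le> B"
        by (cases "even n") (auto simp: B_def odd_iff_mod_2_eq_one)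
    qed (use c0 in auto)
    finally show "norm (tower A n - y) \<le> c ^ (n div 2) * B" by simp
  qed
  have "(\<lambda>n. c ^ (n div 2)) \<longlonglongrightarrow> 0"
    using filterlim_compose[OF LIMSEQ_power_zero div2_filterlim, of c] c0 c1 by simp
  then have "(\<lambda>n. c ^ (n div 2) * B) \<longlonglongrightarrow> 0" by (rule tendsto_mult_left_zero)
  then have "(\<lambda>n. tower A n - y) \<longlonglongrightarrow> 0"
    by (rule Lim_null_comparison[rotated]) (rule always_eventually[OF bnd])
  then show ?thesis unfolding A_def[symmetric] by (rule LIM_zero_cancel)
qed


lemma alg_phi:
  fixes y :: real
  assumes "y \<in> \<rat>" "0 < y"
  shows "algebraic (y powr (1/y))"
proof -
  obtain p q :: int where pq: "q > 0" "y = of_int p / of_int q"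
    using Rats_cases'[OF assms(1)] by metis
  have "0 < real_of_int p / real_of_int q" using pq(2) assms(2) by metis
  then have p0: "p > 0" using pq(1) by (simp add: zero_less_divide_iff)
  have "y powr (1/y) = y powr (real (nat q) * (1 / real (nat p)))"
    using pq p0 by simp
  also have "\<dots> = (y powr real (nat q)) powr (1 / real (nat p))"
    by (simp add: powr_powr)
  also have "\<dots> = root (nat p) (y ^ nat q)"
    using assms(2) p0 by (simp add: powr_realpow root_powr_inverse)
  finally have e: "y powr (1/y) = root (nat p) (y ^ nat q)" .
  have "y ^ nat q \<in> \<rat>" using assms(1) by simp
  then show ?thesis unfolding e by (intro algebraic_nth_root_real rat_imp_algebraic)
qed

lemma h_eq: "tower A \<longlonglongrightarrow> y \<Longrightarrow> h A = y"
  unfolding h_def by (rule limI)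

lemma phi_range:
  fixes y :: real
  assumes "exp (-1) \<le> y" "y \<le> exp 1"
  shows "y powr (1/y) \<in> {exp (- exp 1) .. exp (1 / exp 1)}"
proof -
  have y0: "0 < y" using assms(1) by (metis exp_gt_zero less_le_trans)
  have l1: "-1 \<le> ln y" using assms(1) y0 ln_le_cancel_iff[of "exp (-1)" y] by simp
  have ey: "1 \<le> exp 1 * y" using assms(1) by (simp add: exp_minus field_simps)
  have lo: "- exp 1 \<le> ln y / y"
  proof -
    have "- exp 1 * y \<le> ln y" using l1 ey by linarith
    then show ?thesis using y0 by (simp add: le_divide_eq)
  qed
  have "ln (y / exp 1) \<le> y / exp 1 - 1" using y0 by (intro ln_le_minus_one) auto
  then have "ln y \<le> y / exp 1" using y0 by (simp add: ln_div)
  then have hi: "ln y / y \<le> 1 / exp 1" using y0 by (simp add: divide_le_eq field_simps)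
  have e: "y powr (1/y) = exp (ln y / y)" using y0 by (simp add: powr_def)
  show ?thesis unfolding e using lo hi by simp
qed

lemma cont_phi: "continuous_on {exp (-1) .. exp 1} (\<lambda>y::real. y powr (1/y))"
proof -
  have nz: "\<forall>x\<in>{exp (-1) .. exp (1::real)}. x \<noteq> 0"
    by (metis atLeastAtMost_iff exp_gt_zero less_le_trans less_irrefl)
  have "continuous_on {exp (-1) .. exp 1} (\<lambda>y::real. 1 / y)"
    using nz by (intro continuous_on_divide continuous_on_const continuous_on_id) auto
  then show ?thesis using nz by (intro continuous_on_powr continuous_on_id) auto
qed

theorem theorem2p4:
  shows "{exp (- exp 1) .. exp (1 / exp 1)} \<subseteq>
    closure {A :: real. algebraic A \<and> A \<in> {exp (- exp 1) .. exp (1 / exp 1)} \<and> algebraic (h A)}"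
proof -
  define S where "S = {A :: real. algebraic A \<and> A \<in> {exp (- exp 1) .. exp (1 / exp 1)} \<and> algebraic (h A)}"
  define U :: "real set" where "U = {exp (-1)<..<1} \<union> {1<..<exp 1}"
  define R where "R = U \<inter> \<rat>"
  define \<phi> :: "real \<Rightarrow> real" where "\<phi> y = y powr (1/y)" for y
  have e1: "exp (-1) < (1::real)" and e2: "1 < exp (1::real)" by auto
  have RS: "\<phi> ` R \<subseteq> S"
  proof
    fix A assume "A \<in> \<phi> ` R"
    then obtain y where y: "y \<in> U" "y \<in> \<rat>" "A = \<phi> y" by (auto simp: R_def)
    have yU: "(exp (-1) < y \<and> y < 1) \<or> (1 < y \<and> y < exp 1)" using y(1) by (simp add: U_def)
    have yb: "exp (-1) \<le> y" "y \<le> exp 1" using yU e1 e2 by linarith+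
    have y0: "0 < y" using yb(1) by (metis exp_gt_zero less_le_trans)
    have conv: "tower A \<longlonglongrightarrow> y"
      using yU conv_gt1[of y] conv_lt1[of y] unfolding y(3) \<phi>_def by blast
    have "algebraic A" using alg_phi[OF y(2) y0] y(3) by (simp add: \<phi>_def)
    moreover have "A \<in> {exp (- exp 1) .. exp (1 / exp 1)}"
      using phi_range[OF yb] unfolding y(3) \<phi>_def .
    moreover have "algebraic (h A)" using h_eq[OF conv] y(2) by (simp add: rat_imp_algebraic)
    ultimately show "A \<in> S" by (simp add: S_def)
  qed
  have UR: "U \<subseteq> closure R"
  proof -
    have "open U" by (simp add: U_def open_Un)
    then have "U \<inter> closure \<rat> \<subseteq> closure (U \<inter> \<rat>)" by (rule open_Int_closure_subset)
    then show ?thesis by (simp add: Rats_closure_real R_def)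
  qed
  have cU: "closure U = {exp (-1)..1} \<union> {1..exp 1}"
    using e1 e2 by (simp add: U_def closure_Un)
  have IR: "{exp (-1)..exp 1} \<subseteq> closure R"
  proof -
    have "closure U \<subseteq> closure R" using UR by (simp add: closure_minimal)
    then have "{exp (-1)..1} \<union> {1..exp 1} \<subseteq> closure R" unfolding cU .
    moreover have "{exp (-1)..exp 1} \<subseteq> {exp (-1)..1} \<union> {1..exp (1::real)}" by auto
    ultimately show ?thesis by blast
  qed
  have RI: "closure R \<subseteq> {exp (-1)..exp 1}"
  proof (rule closure_minimal)
    show "closed {exp (-1)..exp (1::real)}" by simp
    show "R \<subseteq> {exp (-1)..exp 1}"
    proof
      fix y assume "y \<in> R"
      then have "(exp (-1) < y \<and> y < 1) \<or> (1 < y \<and> y < exp 1)" by (simp add: R_def U_def)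
      then show "y \<in> {exp (-1)..exp 1}" using e1 e2
        by (metis atLeastAtMost_iff less_imp_le less_trans)
    qed
  qed
  have img: "\<phi> ` closure R \<subseteq> closure S"
  proof (rule image_closure_subset)
    show "continuous_on (closure R) \<phi>" unfolding \<phi>_def using cont_phi RI by (rule continuous_on_subset)
    show "closed (closure S)" by simp
    show "\<phi> ` R \<subseteq> closure S" using RS closure_subset[of S] by blast
  qed
  show ?thesis
  proof
    fix x :: real assume x: "x \<in> {exp (- exp 1) .. exp (1 / exp 1)}"
    have a: "\<phi> (exp (-1)) = exp (- exp 1)"
    proof -
      have "\<phi> (exp (-1)) = exp (1 / exp (-1) * ln (exp (-1)))" by (simp add: \<phi>_def powr_def)
      also have "1 / exp (-1) * ln (exp (-1)) = - exp (1::real)"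
      proof -
        have l: "ln (exp (-1::real)) = -1" by (rule ln_exp)
        have i: "1 / exp (-1::real) = exp 1" by (simp add: exp_minus divide_inverse)
        show ?thesis unfolding l i by simp
      qed
      finally show ?thesis .
    qed
    have b: "\<phi> (exp 1) = exp (1 / exp 1)" by (simp add: \<phi>_def powr_def)
    obtain y where y: "exp (-1) \<le> y" "y \<le> exp 1" "\<phi> y = x"
    proof -
      have "\<phi> (exp (-1)) \<le> x" "x \<le> \<phi> (exp 1)" using x a b by auto
      moreover have "exp (-1) \<le> exp (1::real)" using e1 e2 by simp
      moreover have "continuous_on {exp (-1) .. exp 1} \<phi>" using cont_phi unfolding \<phi>_def .
      ultimately show ?thesis using IVT'[of \<phi> "exp (-1)" x "exp 1"] that by blast
    qed
    have "y \<in> closure R" using IR y by auto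
    then have "x \<in> closure S" using img y(3) by blast
    then show "x \<in> closure {A :: real. algebraic A \<and> A \<in> {exp (- exp 1) .. exp (1 / exp 1)} \<and> algebraic (h A)}"
      by (simp add: S_def)
  qed
qed

end
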